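(* Let $A$ be a Banach algebra and $f\in A^*$. The following are equivalent: (i) whenever $(x_n),(y_n)$ are weakly null sequences in $A$, $f(x_ny_n)\to 0$; (ii) whenever $(x_n)$ is a weakly null sequence and $(y_n)$ is a weakly Cauchy sequence in $A$, $f(x_ny_n)\to 0$; (iii) $T_f$ maps weakly precompact subsets of $A$ onto L-sets; (iii') $S_f$ maps weakly precompact subsets of $A$ onto L-sets.
   Context: For a Banach algebra $A$, $f\in A^*$ and $a\in A$, define $fa,af\in A^*$ by $fa(x)=f(ax)$ and $af(x)=f(xa)$ for $x\in A$. The operators $T_f,S_f:A\to A^*$ are $T_f(a)=fa$ and $S_f(a)=af$. A set $E\subseteq A^*$ is an L-set if for every weakly null sequence $(x_n)$ in $A$, $\lim_{n\to\infty}\sup_{g\in E}|g(x_n)|=0$. A subset of a Banach space is weakly precompact if every sequence in it has a weakly Cauchy subsequence. *)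

theory Defs
  imports "HOL-Analysis.Analysis"
begin

text \<open>Banach algebra A: a type of class real_normed_algebra (associative, not necessarily
unital) that is complete (banach). The dual A^* consists of the bounded linear
functionals A \<Rightarrow> real.\<close>

definition weakly_null :: "(nat \<Rightarrow> 'a::real_normed_vector) \<Rightarrow> bool" where
  "weakly_null x \<longleftrightarrow> (\<forall>g::'a \<Rightarrow> real. bounded_linear g \<longrightarrow> (\<lambda>n. g (x n)) \<longlonglongrightarrow> 0)"

definition weakly_Cauchy :: "(nat \<Rightarrow> 'a::real_normed_vector) \<Rightarrow> bool" where
  "weakly_Cauchy x \<longleftrightarrow> (\<forall>g::'a \<Rightarrow> real. bounded_linear g \<longrightarrow> Cauchy (\<lambda>n. g (x n)))"

definition weakly_precompact :: "'a::real_normed_vector set \<Rightarrow> bool" where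
  "weakly_precompact S \<longleftrightarrow>
     (\<forall>x::nat \<Rightarrow> 'a. (\<forall>n. x n \<in> S) \<longrightarrow> (\<exists>r. strict_mono r \<and> weakly_Cauchy (x \<circ> r)))"

text \<open>L-set: sup over E of |g(x_n)| tends to 0 for every weakly null (x_n),
written out uniformly (avoids Sup of possibly unbounded real sets).\<close>
definition L_set :: "('a::real_normed_vector \<Rightarrow> real) set \<Rightarrow> bool" where
  "L_set E \<longleftrightarrow> (\<forall>x. weakly_null x \<longrightarrow>
      (\<forall>\<epsilon>>0. \<exists>N. \<forall>n\<ge>N. \<forall>g\<in>E. \<bar>g (x n)\<bar> \<le> \<epsilon>))"

definition T_op :: "('a::real_normed_algebra \<Rightarrow> real) \<Rightarrow> 'a \<Rightarrow> ('a \<Rightarrow> real)" where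
  "T_op f a = (\<lambda>x. f (a * x))"

definition S_op :: "('a::real_normed_algebra \<Rightarrow> real) \<Rightarrow> 'a \<Rightarrow> ('a \<Rightarrow> real)" where
  "S_op f a = (\<lambda>x. f (x * a))"

end

theory Submission
  imports Defs
begin

lemma wC_subseq:
  assumes "weakly_Cauchy x" "strict_mono r"
  shows "weakly_Cauchy (x \<circ> r)"
  unfolding weakly_Cauchy_def
proof (intro allI impI)
  fix g :: "'a \<Rightarrow> real" assume "bounded_linear g"
  then have "Cauchy (\<lambda>n. g (x n))" using assms(1) unfolding weakly_Cauchy_def by blast
  then obtain L where "(\<lambda>n. g (x n)) \<longlonglongrightarrow> L" using Cauchy_convergent_iff convergent_def by blast
  then have "((\<lambda>n. g (x n)) \<circ> r) \<longlonglongrightarrow> L" using LIMSEQ_subseq_LIMSEQ assms(2) by blast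
  then show "Cauchy (\<lambda>n. g ((x \<circ> r) n))" using LIMSEQ_imp_Cauchy by (simp add: o_def)
qed

lemma wn_subseq:
  assumes "weakly_null x" "strict_mono r"
  shows "weakly_null (x \<circ> r)"
  unfolding weakly_null_def
proof (intro allI impI)
  fix g :: "'a \<Rightarrow> real" assume "bounded_linear g"
  then have "(\<lambda>n. g (x n)) \<longlonglongrightarrow> 0" using assms(1) unfolding weakly_null_def by blast
  then have "((\<lambda>n. g (x n)) \<circ> r) \<longlonglongrightarrow> 0" using LIMSEQ_subseq_LIMSEQ assms(2) by blast
  then show "(\<lambda>n. g ((x \<circ> r) n)) \<longlonglongrightarrow> 0" by (simp add: o_def)
qed

lemma wn_wC: "weakly_null x \<Longrightarrow> weakly_Cauchy x"
  unfolding weakly_null_def weakly_Cauchy_def using LIMSEQ_imp_Cauchy by blast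

lemma cauchy_diff:
  assumes "Cauchy (c::nat\<Rightarrow>real)" "strict_mono s"
  shows "(\<lambda>k. c (s (Suc k)) - c (s k)) \<longlonglongrightarrow> 0"
proof -
  obtain L where L: "c \<longlonglongrightarrow> L" using assms(1) Cauchy_convergent_iff convergent_def by blast
  have sm: "strict_mono (s \<circ> Suc)" using assms(2) by (simp add: strict_mono_def)
  have 1: "(c \<circ> (s \<circ> Suc)) \<longlonglongrightarrow> L" using LIMSEQ_subseq_LIMSEQ[OF L sm] .
  have 2: "(c \<circ> s) \<longlonglongrightarrow> L" using LIMSEQ_subseq_LIMSEQ[OF L assms(2)] .
  have "(\<lambda>k. (c \<circ> (s \<circ> Suc)) k - (c \<circ> s) k) \<longlonglongrightarrow> L - L" using tendsto_diff[OF 1 2] .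
  then show ?thesis by (simp add: o_def)
qed

lemma wp_range:
  assumes "weakly_Cauchy x"
  shows "weakly_precompact (range x)"
  unfolding weakly_precompact_def
proof (intro allI impI)
  fix z :: "nat \<Rightarrow> 'a" assume "\<forall>n. z n \<in> range x"
  then have "\<forall>n. \<exists>m. z n = x m" by blast
  then obtain \<phi> where \<phi>: "\<And>n. z n = x (\<phi> n)" by metis
  show "\<exists>r. strict_mono r \<and> weakly_Cauchy (z \<circ> r)"
  proof (cases "\<exists>m. infinite {n. \<phi> n = m}")
    case True
    then obtain m where inf: "infinite {n. \<phi> n = m}" by blast
    define r where "r = enumerate {n. \<phi> n = m}"
    have "strict_mono r" using strict_mono_enumerate[OF inf] r_def by simp
    moreover have "\<And>k. \<phi> (r k) = m" using enumerate_in_set[OF inf] r_def by auto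
    then have "z \<circ> r = (\<lambda>_. x m)" using \<phi> by (auto simp: o_def fun_eq_iff)
    moreover have "weakly_Cauchy (\<lambda>_::nat. x m)" unfolding weakly_Cauchy_def
      by (auto intro: LIMSEQ_imp_Cauchy tendsto_const)
    ultimately show ?thesis by auto
  next
    case False
    then have fin: "\<And>m. finite {n. \<phi> n = m}" by blast
    have big: "\<exists>n>m. \<phi> n > B" for m B
    proof -
      have "{n. \<phi> n \<le> B} = (\<Union>j\<le>B. {n. \<phi> n = j})" by auto
      then have "finite {n. \<phi> n \<le> B}" using fin by auto
      then obtain M where M: "\<forall>n\<in>{n. \<phi> n \<le> B}. n \<le> M" using finite_nat_set_iff_bounded_le by blast
      show "\<exists>n>m. \<phi> n > B"
      proof (rule exI[of _ "Suc (max m M)"], intro conjI)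
        show "\<phi> (Suc (max m M)) > B"
        proof (rule ccontr)
          assume "\<not> \<phi> (Suc (max m M)) > B"
          then have "Suc (max m M) \<le> M" using M by auto
          then show False by simp
        qed
      qed simp
    qed
    define r where "r = rec_nat 0 (\<lambda>_ k. SOME n. n > k \<and> \<phi> n > \<phi> k)"
    have rS: "r (Suc k) > r k \<and> \<phi> (r (Suc k)) > \<phi> (r k)" for k
    proof -
      have "r (Suc k) = (SOME n. n > r k \<and> \<phi> n > \<phi> (r k))" by (simp add: r_def)
      then show ?thesis using someI_ex[OF big[of "r k" "\<phi> (r k)"]] by simp
    qed
    have sm: "strict_mono r" using rS by (simp add: strict_mono_Suc_iff)
    have sm2: "strict_mono (\<phi> \<circ> r)" using rS by (simp add: strict_mono_Suc_iff)
    have "z \<circ> r = x \<circ> (\<phi> \<circ> r)" using \<phi> by (auto simp: fun_eq_iff)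
    then show ?thesis using wC_subseq[OF assms sm2] sm by auto
  qed
qed

lemma null_cauchy:
  fixes h :: "'a::real_normed_vector \<Rightarrow> 'a \<Rightarrow> real"
  assumes lin: "\<And>b. bounded_linear (\<lambda>a. h a b)"
    and diff: "\<And>a b c. h a (b - c) = h a b - h a c"
    and P: "\<And>x y. weakly_null x \<Longrightarrow> weakly_null y \<Longrightarrow> (\<lambda>n. h (x n) (y n)) \<longlonglongrightarrow> 0"
    and x: "weakly_null x" and y: "weakly_Cauchy y"
  shows "(\<lambda>n. h (x n) (y n)) \<longlonglongrightarrow> 0"
proof (rule ccontr)
  assume "\<not> ?thesis"
  then obtain \<epsilon> where e: "\<epsilon> > 0" and inf: "\<And>N. \<exists>n\<ge>N. \<epsilon> \<le> \<bar>h (x n) (y n)\<bar>"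
    unfolding LIMSEQ_def dist_real_def by (force simp: not_less)
  have fix0: "\<exists>N. \<forall>n\<ge>N. \<bar>h (x n) (y m)\<bar> < \<epsilon>/2" for m
  proof -
    have "(\<lambda>n. h (x n) (y m)) \<longlonglongrightarrow> 0" using x lin unfolding weakly_null_def by blast
    then show ?thesis using e unfolding LIMSEQ_def dist_real_def
      by (metis half_gt_zero diff_zero)
  qed
  define P where "P m n \<longleftrightarrow> n > m \<and> \<epsilon> \<le> \<bar>h (x n) (y n)\<bar> \<and> \<bar>h (x n) (y m)\<bar> < \<epsilon>/2" for m n
  have step: "\<exists>n. P m n" for m
  proof -
    obtain N where N: "\<forall>n\<ge>N. \<bar>h (x n) (y m)\<bar> < \<epsilon>/2" using fix0 by blast
    obtain n where "n \<ge> max N (Suc m)" "\<epsilon> \<le> \<bar>h (x n) (y n)\<bar>" using inf by blast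
    then show ?thesis using N unfolding P_def by (intro exI[of _ n]) auto
  qed
  obtain n0 where n0: "\<epsilon> \<le> \<bar>h (x n0) (y n0)\<bar>" using inf by blast
  define s where "s = rec_nat n0 (\<lambda>_ m. SOME n. P m n)"
  have Ps: "P (s k) (s (Suc k))" for k
  proof -
    have "s (Suc k) = (SOME n. P (s k) n)" by (simp add: s_def)
    then show ?thesis using someI_ex[OF step[of "s k"]] by simp
  qed
  have mono: "strict_mono s" using Ps unfolding P_def by (simp add: strict_mono_Suc_iff)
  have mono2: "strict_mono (s \<circ> Suc)" using mono by (simp add: strict_mono_def)
  define u where "u k = x (s (Suc k))" for k
  define v where "v k = y (s (Suc k)) - y (s k)" for k
  have u: "weakly_null u"
    using wn_subseq[OF x mono2] unfolding u_def by (simp add: o_def)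
  have v: "weakly_null v" unfolding weakly_null_def
  proof (intro allI impI)
    fix g :: "'a \<Rightarrow> real" assume g: "bounded_linear g"
    have "Cauchy (\<lambda>n. g (y n))" using y g unfolding weakly_Cauchy_def by blast
    from cauchy_diff[OF this mono]
    show "(\<lambda>n. g (v n)) \<longlonglongrightarrow> 0" unfolding v_def using linear_diff[OF bounded_linear.linear[OF g]] by simp
  qed
  have "(\<lambda>k. h (u k) (v k)) \<longlonglongrightarrow> 0" using P[OF u v] .
  then obtain K where K: "\<forall>k\<ge>K. \<bar>h (u k) (v k)\<bar> < \<epsilon>/2"
    using e unfolding LIMSEQ_def dist_real_def by (metis half_gt_zero diff_zero)
  have eq: "h (u K) (v K) = h (x (s (Suc K))) (y (s (Suc K))) - h (x (s (Suc K))) (y (s K))"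
    unfolding u_def v_def diff ..
  from Ps[of K] have "\<bar>h (u K) (v K)\<bar> \<ge> \<epsilon>/2" unfolding eq P_def by linarith
  with K show False by auto
qed

lemma cauchy_L:
  fixes \<Phi> :: "'a::real_normed_vector \<Rightarrow> 'a \<Rightarrow> real"
  assumes P: "\<And>x y. weakly_Cauchy x \<Longrightarrow> weakly_null y \<Longrightarrow> (\<lambda>n. \<Phi> (x n) (y n)) \<longlonglongrightarrow> 0"
    and K: "weakly_precompact K"
  shows "L_set (\<Phi> ` K)"
  unfolding L_set_def
proof (intro allI impI)
  fix x :: "nat \<Rightarrow> 'a" and \<epsilon> :: real assume x: "weakly_null x" and e: "\<epsilon> > 0"
  show "\<exists>N. \<forall>n\<ge>N. \<forall>g\<in>\<Phi> ` K. \<bar>g (x n)\<bar> \<le> \<epsilon>"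
  proof (rule ccontr)
    assume "\<not> ?thesis"
    then have unb: "\<forall>N. \<exists>n\<ge>N. \<exists>a\<in>K. \<epsilon> < \<bar>\<Phi> a (x n)\<bar>" by (auto simp: not_le)
    define S where "S = {n. \<exists>a\<in>K. \<epsilon> < \<bar>\<Phi> a (x n)\<bar>}"
    have inf: "infinite S" unfolding S_def infinite_nat_iff_unbounded_le using unb by auto
    define r where "r = enumerate S"
    have r: "strict_mono r" using strict_mono_enumerate[OF inf] r_def by simp
    have "\<forall>k. \<exists>a\<in>K. \<epsilon> < \<bar>\<Phi> a (x (r k))\<bar>"
      using enumerate_in_set[OF inf] unfolding r_def S_def by auto
    then obtain a where a: "\<And>k. a k \<in> K" "\<And>k. \<epsilon> < \<bar>\<Phi> (a k) (x (r k))\<bar>" by metis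
    from K a(1) obtain q where q: "strict_mono q" "weakly_Cauchy (a \<circ> q)"
      unfolding weakly_precompact_def by blast
    have "weakly_null (x \<circ> (r \<circ> q))" using wn_subseq[OF x strict_mono_o[OF r q(1)]] .
    then have "(\<lambda>n. \<Phi> ((a\<circ>q) n) ((x\<circ>(r\<circ>q)) n)) \<longlonglongrightarrow> 0" using P q(2) by blast
    then obtain N where "\<forall>n\<ge>N. \<bar>\<Phi> ((a\<circ>q) n) ((x\<circ>(r\<circ>q)) n)\<bar> < \<epsilon>"
      using e unfolding LIMSEQ_def dist_real_def by (metis diff_zero)
    with a(2)[of "q N"] show False by auto
  qed
qed

lemma L_null:
  fixes \<Phi> :: "'a::real_normed_vector \<Rightarrow> 'a \<Rightarrow> real"
  assumes L: "\<And>K. weakly_precompact K \<Longrightarrow> L_set (\<Phi> ` K)"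
    and x: "weakly_null x" and y: "weakly_null y"
  shows "(\<lambda>n. \<Phi> (x n) (y n)) \<longlonglongrightarrow> 0"
proof -
  have "weakly_precompact (range x)" using wp_range wn_wC x by blast
  then have "L_set (\<Phi> ` range x)" using L by blast
  then have H: "\<forall>\<epsilon>>0. \<exists>N. \<forall>n\<ge>N. \<forall>g\<in>\<Phi> ` range x. \<bar>g (y n)\<bar> \<le> \<epsilon>"
    using y unfolding L_set_def by blast
  show ?thesis unfolding LIMSEQ_def dist_real_def
  proof (intro allI impI)
    fix \<epsilon>::real assume e: "\<epsilon>>0"
    then obtain N where N: "\<forall>n\<ge>N. \<forall>g\<in>\<Phi> ` range x. \<bar>g (y n)\<bar> \<le> \<epsilon>/2"
      using H half_gt_zero by blast
    show "\<exists>N. \<forall>n\<ge>N. \<bar>\<Phi> (x n) (y n) - 0\<bar> < \<epsilon>"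
    proof (intro exI allI impI)
      fix n assume "n \<ge> N"
      then have "\<bar>\<Phi> (x n) (y n)\<bar> \<le> \<epsilon>/2" using N by blast
      then show "\<bar>\<Phi> (x n) (y n) - 0\<bar> < \<epsilon>" using e by simp
    qed
  qed
qed

theorem mainTheorem1:
  fixes f :: "'a::{real_normed_algebra, banach} \<Rightarrow> real"
  assumes "bounded_linear f"
  defines "P1 \<equiv> (\<forall>x y. weakly_null x \<longrightarrow> weakly_null y \<longrightarrow> (\<lambda>n. f (x n * y n)) \<longlonglongrightarrow> 0)"
      and "P2 \<equiv> (\<forall>x y. weakly_null x \<longrightarrow> weakly_Cauchy y \<longrightarrow> (\<lambda>n. f (x n * y n)) \<longlonglongrightarrow> 0)"
      and "P3 \<equiv> (\<forall>K::'a set. weakly_precompact K \<longrightarrow> L_set (T_op f ` K))"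
      and "P3' \<equiv> (\<forall>K::'a set. weakly_precompact K \<longrightarrow> L_set (S_op f ` K))"
  shows "(P1 \<longleftrightarrow> P2) \<and> (P2 \<longleftrightarrow> P3) \<and> (P3 \<longleftrightarrow> P3')"
proof -
  have lin1: "bounded_linear (\<lambda>a. f (a * b))" for b
    using bounded_linear_compose[OF assms(1) bounded_linear_mult_left] by (simp add: o_def)
  have lin2: "bounded_linear (\<lambda>a. f (b * a))" for b
    using bounded_linear_compose[OF assms(1) bounded_linear_mult_right] by (simp add: o_def)
  have d1: "f (a * (b - c)) = f (a * b) - f (a * c)" for a b c
    by (simp add: right_diff_distrib linear_diff[OF bounded_linear.linear[OF assms(1)]])
  have d2: "f ((b - c) * a) = f (b * a) - f (c * a)" for a b c
    by (simp add: left_diff_distrib linear_diff[OF bounded_linear.linear[OF assms(1)]])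
  have h12: "P1 \<Longrightarrow> P2" unfolding P1_def P2_def
    using null_cauchy[of "\<lambda>a b. f (a * b)", OF lin1 d1] by blast
  have h21: "P2 \<Longrightarrow> P1" unfolding P1_def P2_def using wn_wC by blast
  have h1Q: "P1 \<Longrightarrow> weakly_Cauchy x \<Longrightarrow> weakly_null y \<Longrightarrow> (\<lambda>n. f (x n * y n)) \<longlonglongrightarrow> 0" for x y
    unfolding P1_def using null_cauchy[of "\<lambda>a b. f (b * a)", OF lin2 d2, of y x] by blast
  have h13: "P1 \<Longrightarrow> P3" unfolding P3_def
    using cauchy_L[of "T_op f"] h1Q by (simp add: T_op_def)
  have h31: "P3 \<Longrightarrow> P1" unfolding P3_def P1_def
    using L_null[of "T_op f"] by (simp add: T_op_def)
  have h13b: "P1 \<Longrightarrow> P3'" unfolding P3'_def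
    using cauchy_L[of "S_op f"] h12 unfolding P2_def by (simp add: S_op_def)
  have h3b1: "P3' \<Longrightarrow> P1" unfolding P3'_def P1_def
    using L_null[of "S_op f"] by (simp add: S_op_def)
  show ?thesis using h12 h21 h13 h31 h13b h3b1 by blast
qed

end
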